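(* Let $\mathcal{M}=(Q,V,I_0,T,F)$ be a polyglot model. Suppose that for every transition $((q,q'),(g,u))\in T$, with $u=\{(d,d')\mid d'=f_k\circ\cdots\circ f_1(d)\}$ where $f_j=(C_j,\mathcal{L}_j)\in F$, we are given for each $j\in\{1,\dots,k\}$ a valid contract $(P_j,Q_j)$ for $f_j$ such that for every $j\in\{1,\dots,k-1\}$, $$\forall d\in D(V).\ [\![Q_j]\!]_{\mathcal{L}_j}(d)\implies [\![P_{j+1}]\!]_{\mathcal{L}_{j+1}}(d).$$ Let $\mathcal{M}'$ be the model obtained from $\mathcal{M}$ by replacing, in every transition, the update relation $u$ by $$u'=\{(a,b)\in D(V)\times D(V)\mid [\![P_1]\!]_{\mathcal{L}_1}(a)\implies [\![Q_k]\!]_{\mathcal{L}_k}(b)\},$$ keeping modes, variables, initial states and guards unchanged. Then for every property $\phi$ (a set of infinite traces over $D(V)$), if $\mathcal{M}'\models\phi$ then $\mathcal{M}\models\phi$.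
   Context: An Extended State Machine (ESM) is a tuple $(Q,V,I_0,T)$: $Q$ a set of modes, $V$ a set of typed variables (with $D(v)$ the domain of $v$ and $D(V)$ the Cartesian product of the domains, i.e. the set of assignments $d$ to $V$), $I_0\subseteq Q\times D(V)$ a set of initial states, and $T\subseteq (Q\times Q)\times(G\times U)$ a set of transitions, each labelled by a guard $g:D(V)\to\mathbb{B}$ and an update relation $u\subseteq D(V)\times D(V)$. An execution starts in an initial state and, from a state $(q,d)$, takes a transition $((q,q'),(g,u))$ with $g(d)$ true and moves to a state $(q',d')$ with $(d,d')\in u$. A trace of an execution is the infinite sequence of assignments $d$ seen along it; $\mathcal{T}(\mathcal{M})$ is the set of all traces of $\mathcal{M}$. A property $\phi$ is a set of traces, and $\mathcal{M}\models\phi$ means $\mathcal{T}(\mathcal{M})\subseteq\phi$. A language $\mathcal{L}$ is a set of terms and predicates over $V$ with fixed interpretations: each term $t$ denotes a function $[\![t]\!]_{\mathcal{L}}:D(V)\to D(V)$ and each predicate $p$ denotes $[\![p]\!]_{\mathcal{L}}:D(V)\to\mathbb{B}$. A procedure is a pair $f=(C,\mathcal{L})$ with $C$ a term of $\mathcal{L}$ (procedures are total and terminating); for procedures, $f_1\circ f_2(d)=[\![C_1]\!]_{\mathcal{L}_1}([\![C_2]\!]_{\mathcal{L}_2}(d))$. A polyglot model is a tuple $(Q,V,I_0,T,F)$ where $(Q,V,I_0,T)$ is an ESM and $F$ is a set of procedures, such that every transition's update relation has the form $u=\{(d,d')\mid d'=f_k\circ\cdots\circ f_1(d)\}$ for some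 $f_i\in F$. A contract for a procedure $(C,\mathcal{L})$ is a pair $(P,Q)$ of predicates of $\mathcal{L}$; it is valid iff $\forall d,d'\in D(V).\ ([\![P]\!]_{\mathcal{L}}(d)\wedge d'=[\![C]\!]_{\mathcal{L}}(d))\implies [\![Q]\!]_{\mathcal{L}}(d')$. *)

theory Defs
  imports Main
begin

text \<open>
  Assignments to the variables V are modelled by a type 'd (= D(V)); modes by a type 'q.
  A language L is abstract (type 'lang), with fixed interpretation functions
  tsem L C : 'd => 'd for terms and psem L P : 'd => bool for predicates.
\<close>

type_synonym ('q, 'd) transition = "('q \<times> 'q) \<times> (('d \<Rightarrow> bool) \<times> ('d \<times> 'd) set)"
type_synonym ('t, 'lang) procedure = "'t \<times> 'lang"

definition guard_of :: "('q, 'd) transition \<Rightarrow> ('d \<Rightarrow> bool)" where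
  "guard_of tr = fst (snd tr)"

definition update_of :: "('q, 'd) transition \<Rightarrow> ('d \<times> 'd) set" where
  "update_of tr = snd (snd tr)"

definition is_execution ::
  "'q set \<Rightarrow> ('q \<times> 'd) set \<Rightarrow> ('q, 'd) transition set \<Rightarrow> (nat \<Rightarrow> 'q \<times> 'd) \<Rightarrow> bool" where
  "is_execution Q I0 T s \<longleftrightarrow> s 0 \<in> I0 \<and>
     (\<forall>i. \<exists>g u. ((fst (s i), fst (s (Suc i))), (g, u)) \<in> T \<and> g (snd (s i))
                 \<and> (snd (s i), snd (s (Suc i))) \<in> u)"

definition traces ::
  "'q set \<Rightarrow> ('q \<times> 'd) set \<Rightarrow> ('q, 'd) transition set \<Rightarrow> (nat \<Rightarrow> 'd) set" where
  "traces Q I0 T = {\<lambda>i. snd (s i) | s. is_execution Q I0 T s}"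

definition models ::
  "'q set \<Rightarrow> ('q \<times> 'd) set \<Rightarrow> ('q, 'd) transition set \<Rightarrow> (nat \<Rightarrow> 'd) set \<Rightarrow> bool" where
  "models Q I0 T \<phi> \<longleftrightarrow> traces Q I0 T \<subseteq> \<phi>"

definition proc_sem :: "('lang \<Rightarrow> 't \<Rightarrow> 'd \<Rightarrow> 'd) \<Rightarrow> ('t, 'lang) procedure \<Rightarrow> 'd \<Rightarrow> 'd" where
  "proc_sem tsem f = tsem (snd f) (fst f)"

text \<open>Composition f_k o ... o f_1 for the list [f_1, ..., f_k] (f_1 applied first).\<close>
definition comp_procs :: "('lang \<Rightarrow> 't \<Rightarrow> 'd \<Rightarrow> 'd) \<Rightarrow> ('t, 'lang) procedure list \<Rightarrow> 'd \<Rightarrow> 'd" where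
  "comp_procs tsem fs d = fold (proc_sem tsem) fs d"

definition composed_update ::
  "('lang \<Rightarrow> 't \<Rightarrow> 'd \<Rightarrow> 'd) \<Rightarrow> ('t, 'lang) procedure list \<Rightarrow> ('d \<times> 'd) set" where
  "composed_update tsem fs = {(d, d'). d' = comp_procs tsem fs d}"

definition polyglot_model ::
  "('lang \<Rightarrow> 't \<Rightarrow> 'd \<Rightarrow> 'd) \<Rightarrow> 'q set \<Rightarrow> ('q \<times> 'd) set \<Rightarrow> ('q, 'd) transition set
     \<Rightarrow> ('t, 'lang) procedure set \<Rightarrow> bool" where
  "polyglot_model tsem Q I0 T F \<longleftrightarrow>
     (\<forall>tr\<in>T. \<exists>fs. fs \<noteq> [] \<and> set fs \<subseteq> F \<and> update_of tr = composed_update tsem fs)"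

definition valid_contract ::
  "('lang \<Rightarrow> 't \<Rightarrow> 'd \<Rightarrow> 'd) \<Rightarrow> ('lang \<Rightarrow> 'p \<Rightarrow> 'd \<Rightarrow> bool) \<Rightarrow> ('t, 'lang) procedure \<Rightarrow> 'p \<times> 'p \<Rightarrow> bool" where
  "valid_contract tsem psem f c \<longleftrightarrow>
     (\<forall>d d'. psem (snd f) (fst c) d \<and> d' = tsem (snd f) (fst f) d \<longrightarrow> psem (snd f) (snd c) d')"

definition abstract_update ::
  "('lang \<Rightarrow> 'p \<Rightarrow> 'd \<Rightarrow> bool) \<Rightarrow> ('t, 'lang) procedure list \<Rightarrow> ('p \<times> 'p) list \<Rightarrow> ('d \<times> 'd) set" where
  "abstract_update psem fs cs =
     {(a, b). psem (snd (hd fs)) (fst (hd cs)) a \<longrightarrow> psem (snd (last fs)) (snd (last cs)) b}"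

end

theory Submission
  imports Defs
begin

lemma contract_chain:
  assumes ne: "fs \<noteq> []" and len: "length cs = length fs"
    and valid: "\<forall>j < length fs. valid_contract tsem psem (fs ! j) (cs ! j)"
    and chain: "\<forall>j. Suc j < length fs \<longrightarrow>
                  (\<forall>d. psem (snd (fs ! j)) (snd (cs ! j)) d
                       \<longrightarrow> psem (snd (fs ! Suc j)) (fst (cs ! Suc j)) d)"
    and P: "psem (snd (fs ! 0)) (fst (cs ! 0)) d"
  shows "j < length fs \<Longrightarrow> psem (snd (fs ! j)) (snd (cs ! j)) (fold (proc_sem tsem) (take (Suc j) fs) d)"
proof (induction j)
  case 0
  then show ?case using valid P ne
    by (cases fs) (auto simp: valid_contract_def proc_sem_def)
next
  case (Suc j)
  let ?x = "fold (proc_sem tsem) (take (Suc j) fs) d"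
  have "psem (snd (fs ! j)) (snd (cs ! j)) ?x" using Suc by simp
  hence "psem (snd (fs ! Suc j)) (fst (cs ! Suc j)) ?x" using chain Suc.prems by blast
  hence "psem (snd (fs ! Suc j)) (snd (cs ! Suc j)) (proc_sem tsem (fs ! Suc j) ?x)"
    using valid Suc.prems by (auto simp: valid_contract_def proc_sem_def)
  moreover have "take (Suc (Suc j)) fs = take (Suc j) fs @ [fs ! Suc j]"
    using Suc.prems by (simp add: take_Suc_conv_app_nth)
  ultimately show ?case by simp
qed

lemma contract_chain_full:
  assumes ne: "fs \<noteq> []" and len: "length cs = length fs"
    and valid: "\<forall>j < length fs. valid_contract tsem psem (fs ! j) (cs ! j)"
    and chain: "\<forall>j. Suc j < length fs \<longrightarrow>
                  (\<forall>d. psem (snd (fs ! j)) (snd (cs ! j)) d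
                       \<longrightarrow> psem (snd (fs ! Suc j)) (fst (cs ! Suc j)) d)"
  shows "(d, comp_procs tsem fs d) \<in> abstract_update psem fs cs"
proof -
  have cne: "cs \<noteq> []" using ne len by auto
  { assume P: "psem (snd (hd fs)) (fst (hd cs)) d"
    hence P0: "psem (snd (fs ! 0)) (fst (cs ! 0)) d" using ne cne by (simp add: hd_conv_nth)
    have "psem (snd (fs ! (length fs - 1))) (snd (cs ! (length fs - 1)))
            (fold (proc_sem tsem) (take (Suc (length fs - 1)) fs) d)"
      using contract_chain[OF ne len valid chain P0, of "length fs - 1"] ne by simp
    moreover have "Suc (length fs - 1) = length fs" using ne by simp
    ultimately have "psem (snd (last fs)) (snd (last cs)) (comp_procs tsem fs d)"
      using ne cne len by (simp add: last_conv_nth comp_procs_def)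
  }
  thus ?thesis by (auto simp: abstract_update_def)
qed

theorem theorem1:
  fixes tsem :: "'lang \<Rightarrow> 't \<Rightarrow> 'd \<Rightarrow> 'd"
    and psem :: "'lang \<Rightarrow> 'p \<Rightarrow> 'd \<Rightarrow> bool"
    and Q :: "'q set"
    and I0 :: "('q \<times> 'd) set"
    and T :: "('q, 'd) transition set"
    and F :: "('t, 'lang) procedure set"
    and procs :: "('q, 'd) transition \<Rightarrow> ('t, 'lang) procedure list"
    and contracts :: "('q, 'd) transition \<Rightarrow> ('p \<times> 'p) list"
    and \<phi> :: "(nat \<Rightarrow> 'd) set"
  assumes model: "polyglot_model tsem Q I0 T F"
    and decomp: "\<forall>tr\<in>T. procs tr \<noteq> [] \<and> set (procs tr) \<subseteq> F
                   \<and> update_of tr = composed_update tsem (procs tr)"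
    and len: "\<forall>tr\<in>T. length (contracts tr) = length (procs tr)"
    and valid: "\<forall>tr\<in>T. \<forall>j < length (procs tr).
                  valid_contract tsem psem (procs tr ! j) (contracts tr ! j)"
    and chain: "\<forall>tr\<in>T. \<forall>j. Suc j < length (procs tr) \<longrightarrow>
                  (\<forall>d. psem (snd (procs tr ! j)) (snd (contracts tr ! j)) d
                       \<longrightarrow> psem (snd (procs tr ! Suc j)) (fst (contracts tr ! Suc j)) d)"
    and sat': "models Q I0
                 ((\<lambda>tr. (fst tr, (guard_of tr, abstract_update psem (procs tr) (contracts tr)))) ` T) \<phi>"
  shows "models Q I0 T \<phi>"
proof -
  let ?T' = "(\<lambda>tr. (fst tr, (guard_of tr, abstract_update psem (procs tr) (contracts tr)))) ` T"
  have "is_execution Q I0 ?T' s" if ex: "is_execution Q I0 T s" for s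
    unfolding is_execution_def
  proof (intro conjI allI)
    show "s 0 \<in> I0" using ex by (simp add: is_execution_def)
  next
    fix i
    obtain g u where tr: "((fst (s i), fst (s (Suc i))), (g, u)) \<in> T" and
      gd: "g (snd (s i))" and up: "(snd (s i), snd (s (Suc i))) \<in> u"
      using ex unfolding is_execution_def by blast
    let ?tr = "((fst (s i), fst (s (Suc i))), (g, u))"
    have u: "u = composed_update tsem (procs ?tr)" using bspec[OF decomp tr] by (simp add: update_of_def)
    have eq: "snd (s (Suc i)) = comp_procs tsem (procs ?tr) (snd (s i))"
    proof -
      have "(snd (s i), snd (s (Suc i))) \<in> composed_update tsem (procs ?tr)"
        using up u by metis
      thus ?thesis by (simp add: composed_update_def)
    qed
    have "(snd (s i), comp_procs tsem (procs ?tr) (snd (s i))) \<in> abstract_update psem (procs ?tr) (contracts ?tr)"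
      apply (rule contract_chain_full)
      using decomp len valid chain tr by auto
    hence "(snd (s i), snd (s (Suc i))) \<in> abstract_update psem (procs ?tr) (contracts ?tr)"
      using eq by simp
    moreover have "((fst (s i), fst (s (Suc i))), (g, abstract_update psem (procs ?tr) (contracts ?tr))) \<in> ?T'"
      using tr by (force simp: guard_of_def)
    ultimately show "\<exists>g u. ((fst (s i), fst (s (Suc i))), g, u) \<in> ?T' \<and> g (snd (s i)) \<and> (snd (s i), snd (s (Suc i))) \<in> u"
      using gd by blast
  qed
  thus ?thesis using sat' unfolding models_def traces_def by blast
qed

end
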